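(* For all constants $K_1,K_2,K_3,K_4>0$ there is a constant $K>0$ such that the following holds. Let $\varepsilon\in(0,1]$, let $A$ be a real $n\times n$ matrix, and let $q$ be a number with $K_1\varepsilon^{-2}\le q\le n$. Assume $\|A\|_C\le K_2\,\varepsilon n^2$, $\|A\|_F\le K_3\, n$, and $\max_{i,j}|A_{ij}|\le K_4\,\varepsilon^{-1}$. Let $Q$ be a random subset of $\{1,\dots,n\}$ in which each element is included independently with probability $q/n$. Then $$\mathbb E\,\|A|_{Q\times Q}\|_C\ \le\ K\,\varepsilon q^2.$$
   Context: The cut norm of a matrix $B=(B_{ij})$ is $\|B\|_C=\max_{I,J}\bigl|\sum_{i\in I,j\in J}B_{ij}\bigr|$, the maximum over all subsets $I$ of row indices and $J$ of column indices. $A|_{Q\times Q}=(A_{ij})_{i,j\in Q}$ is the principal submatrix on $Q$ (cut norm $0$ if $Q=\emptyset$). $\|A\|_F$ is the Frobenius norm. *)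

theory Defs
  imports "HOL-Probability.Probability"
begin

text \<open>Matrices are functions nat => nat => real; an n x n matrix uses indices in {..<n}.
  The cut norm of the principal submatrix on an index set S is the max over I, J subseteq S.\<close>

definition cut_norm :: "nat set \<Rightarrow> (nat \<Rightarrow> nat \<Rightarrow> real) \<Rightarrow> real" where
  "cut_norm S B = Max {\<bar>\<Sum>i\<in>I. \<Sum>j\<in>J. B i j\<bar> | I J. I \<subseteq> S \<and> J \<subseteq> S}"

definition frob_norm :: "nat \<Rightarrow> (nat \<Rightarrow> nat \<Rightarrow> real) \<Rightarrow> real" where
  "frob_norm n A = sqrt (\<Sum>i<n. \<Sum>j<n. (A i j)^2)"

definition random_subset :: "nat \<Rightarrow> real \<Rightarrow> nat set pmf" where
  "random_subset n p = map_pmf (\<lambda>f. {i. f i}) (Pi_pmf {..<n} False (\<lambda>_. bernoulli_pmf p))"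

end

theory Submission
  imports Defs
begin

definition ES :: "nat set \<Rightarrow> real \<Rightarrow> (nat set \<Rightarrow> real) \<Rightarrow> real" where
  "ES S p f = (\<Sum>Y\<in>Pow S. p ^ card Y * (1-p) ^ card (S - Y) * f Y)"

lemma ES_empty[simp]: "ES {} p f = f {}"
  by (simp add: ES_def)

lemma ES_insert:
  assumes "finite S" "x \<notin> S"
  shows "ES (insert x S) p f = p * ES S p (\<lambda>Y. f (insert x Y)) + (1-p) * ES S p f"
proof -
  have d: "Pow S \<inter> insert x ` Pow S = {}" using assms by auto
  have inj: "inj_on (insert x) (Pow S)" using assms by (auto simp: inj_on_def)
  have fin: "finite (Pow S)" using assms by simp
  have "ES (insert x S) p f = (\<Sum>Y\<in>Pow S. p ^ card Y * (1-p) ^ card (insert x S - Y) * f Y)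
        + (\<Sum>Y\<in>insert x ` Pow S. p ^ card Y * (1-p) ^ card (insert x S - Y) * f Y)"
    unfolding ES_def Pow_insert using d fin by (simp add: sum.union_disjoint)
  also have "(\<Sum>Y\<in>insert x ` Pow S. p ^ card Y * (1-p) ^ card (insert x S - Y) * f Y)
      = (\<Sum>Y\<in>Pow S. p ^ card (insert x Y) * (1-p) ^ card (insert x S - insert x Y) * f (insert x Y))"
    by (simp add: sum.reindex[OF inj])
  also have "\<dots> = p * ES S p (\<lambda>Y. f (insert x Y))"
    unfolding ES_def sum_distrib_left
  proof (rule sum.cong[OF refl])
    fix Y assume "Y \<in> Pow S"
    then have "Y \<subseteq> S" by auto
    then have "card (insert x Y) = Suc (card Y)" "insert x S - insert x Y = S - Y"
      using assms finite_subset[of Y S] by (auto simp: card_insert_if)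
    then show "p ^ card (insert x Y) * (1-p) ^ card (insert x S - insert x Y) * f (insert x Y)
       = p * (p ^ card Y * (1 - p) ^ card (S - Y) * f (insert x Y))" by simp
  qed
  also have "(\<Sum>Y\<in>Pow S. p ^ card Y * (1-p) ^ card (insert x S - Y) * f Y) = (1-p) * ES S p f"
    unfolding ES_def sum_distrib_left
  proof (rule sum.cong[OF refl])
    fix Y assume "Y \<in> Pow S"
    then have "Y \<subseteq> S" by auto
    then have "insert x S - Y = insert x (S - Y)" using assms by auto
    then have "card (insert x S - Y) = Suc (card (S - Y))" using assms by simp
    then show "p ^ card Y * (1-p) ^ card (insert x S - Y) * f Y
       = (1-p) * (p ^ card Y * (1 - p) ^ card (S - Y) * f Y)" by simp
  qed
  finally show ?thesis by simp
qed

lemma ES_cong: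
  assumes "\<And>Y. Y \<subseteq> S \<Longrightarrow> f Y = g Y"
  shows "ES S p f = ES S p g"
  unfolding ES_def using assms by (intro sum.cong) auto

lemma ES_add: "ES S p (\<lambda>Y. f Y + g Y) = ES S p f + ES S p g"
  unfolding ES_def by (simp add: algebra_simps sum.distrib)

lemma ES_diff: "ES S p (\<lambda>Y. f Y - g Y) = ES S p f - ES S p g"
  unfolding ES_def by (simp add: algebra_simps sum_subtractf)

lemma ES_cmult: "ES S p (\<lambda>Y. c * f Y) = c * ES S p f"
  unfolding ES_def by (simp add: algebra_simps sum_distrib_left)

lemma ES_sum: "finite I \<Longrightarrow> ES S p (\<lambda>Y. \<Sum>i\<in>I. f i Y) = (\<Sum>i\<in>I. ES S p (f i))"
  by (induction I rule: finite_induct) (simp_all add: ES_add ES_def)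

lemma ES_mono:
  assumes "0 \<le> p" "p \<le> 1" "\<And>Y. Y \<subseteq> S \<Longrightarrow> f Y \<le> g Y"
  shows "ES S p f \<le> ES S p g"
  unfolding ES_def using assms by (intro sum_mono mult_left_mono) auto

lemma ES_const: "finite S \<Longrightarrow> ES S p (\<lambda>_. c) = c"
  by (induction S rule: finite_induct) (simp_all add: ES_insert algebra_simps)

lemma ES_swap: "ES S p (\<lambda>Y. ES T r (\<lambda>Z. f Y Z)) = ES T r (\<lambda>Z. ES S p (\<lambda>Y. f Y Z))"
  unfolding ES_def sum_distrib_left by (subst sum.swap) (simp add: algebra_simps)

lemma ES_ind:
  assumes "finite S" "i \<in> S"
  shows "ES S p (\<lambda>Y. if i \<in> Y then 1 else 0) = p"
proof -
  have S: "S = insert i (S - {i})" using assms by auto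
  have "ES S p (\<lambda>Y. if i \<in> Y then 1 else 0) =
     p * ES (S - {i}) p (\<lambda>Y. if i \<in> insert i Y then 1 else 0) + (1-p) * ES (S-{i}) p (\<lambda>Y. if i \<in> Y then 1 else 0)"
    by (subst S, subst ES_insert) (use assms in auto)
  also have "ES (S-{i}) p (\<lambda>Y. if i \<in> Y then 1 else 0) = ES (S-{i}) p (\<lambda>Y. 0)"
    by (rule ES_cong) auto
  finally show ?thesis using assms by (simp add: ES_const)
qed

lemma ES_sum_set:
  assumes "finite S"
  shows "ES S p (\<lambda>Y. \<Sum>j\<in>Y. c j) = p * (\<Sum>j\<in>S. c j)"
proof -
  have "ES S p (\<lambda>Y. \<Sum>j\<in>Y. c j) = ES S p (\<lambda>Y. \<Sum>j\<in>S. c j * (if j \<in> Y then 1 else 0))"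
  proof (rule ES_cong)
    fix Y assume "Y \<subseteq> S"
    then show "(\<Sum>j\<in>Y. c j) = (\<Sum>j\<in>S. c j * (if j \<in> Y then 1 else 0))"
      using assms by (simp add: sum.inter_restrict[symmetric] Int_absorb1 flip: of_bool_def)
  qed
  also have "\<dots> = (\<Sum>j\<in>S. c j * p)"
    using assms by (simp add: ES_sum ES_cmult ES_ind)
  finally show ?thesis by (simp add: sum_distrib_left mult.commute)
qed

lemma ES_ind2:
  assumes "finite S" "i \<in> S" "j \<in> S" "i \<noteq> j"
  shows "ES S p (\<lambda>Y. if i \<in> Y \<and> j \<notin> Y then 1 else 0) = p * (1 - p)"
proof -
  have S: "S = insert i (S - {i})" using assms by auto
  have "ES S p (\<lambda>Y. if i \<in> Y \<and> j \<notin> Y then 1 else 0) =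
     p * ES (S - {i}) p (\<lambda>Y. if i \<in> insert i Y \<and> j \<notin> insert i Y then 1 else 0)
     + (1-p) * ES (S-{i}) p (\<lambda>Y. if i \<in> Y \<and> j \<notin> Y then 1 else 0)"
    by (subst S, subst ES_insert) (use assms in auto)
  also have "ES (S-{i}) p (\<lambda>Y. if i \<in> Y \<and> j \<notin> Y then 1 else 0) = ES (S-{i}) p (\<lambda>Y. 0)"
    by (rule ES_cong) auto
  also have "ES (S - {i}) p (\<lambda>Y. if i \<in> insert i Y \<and> j \<notin> insert i Y then 1 else 0)
     = ES (S - {i}) p (\<lambda>Y. 1 - (if j \<in> Y then 1 else 0))"
    by (rule ES_cong) (use assms in auto)
  finally show ?thesis using assms by (simp add: ES_const ES_diff ES_ind)
qed

lemma ES_jensen: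
  assumes "finite S" "0 \<le> p" "p \<le> 1"
  shows "(ES S p f)^2 \<le> ES S p (\<lambda>Y. (f Y)^2)"
  using assms(1)
proof (induction S arbitrary: f rule: finite_induct)
  case empty then show ?case by simp
next
  case (insert x S)
  let ?a = "ES S p (\<lambda>Y. f (insert x Y))" and ?b = "ES S p f"
  have "(p * ?a + (1-p) * ?b)^2 \<le> p * ?a^2 + (1-p) * ?b^2"
  proof -
    have "p * ?a^2 + (1-p) * ?b^2 - (p * ?a + (1-p) * ?b)^2 = p*(1-p)*(?a - ?b)^2"
      by (simp add: power2_eq_square algebra_simps)
    moreover have "p*(1-p)*(?a - ?b)^2 \<ge> 0" using assms by simp
    ultimately show ?thesis by linarith
  qed
  also have "\<dots> \<le> p * ES S p (\<lambda>Y. (f (insert x Y))^2) + (1-p) * ES S p (\<lambda>Y. (f Y)^2)"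
    using insert.IH[of "\<lambda>Y. f (insert x Y)"] insert.IH[of f] assms
    by (intro add_mono mult_left_mono) auto
  finally show ?case using insert by (simp add: ES_insert)
qed

definition ES2 :: "nat set \<Rightarrow> real \<Rightarrow> (nat set \<Rightarrow> nat set \<Rightarrow> real) \<Rightarrow> real" where
  "ES2 S p F = ES S p (\<lambda>Y. ES S p (\<lambda>Y'. F Y Y'))"

lemma ES2_insert:
  assumes "finite S" "x \<notin> S"
  shows "ES2 (insert x S) p F = p*p*ES2 S p (\<lambda>Y Y'. F (insert x Y) (insert x Y'))
     + p*(1-p)*ES2 S p (\<lambda>Y Y'. F (insert x Y) Y') + (1-p)*p*ES2 S p (\<lambda>Y Y'. F Y (insert x Y'))
     + (1-p)*(1-p)*ES2 S p F"
  unfolding ES2_def by (simp only: ES_insert[OF assms] ES_add ES_cmult) (simp add: algebra_simps)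

lemma ES2_cong:
  assumes "\<And>Y Y'. Y \<subseteq> S \<Longrightarrow> Y' \<subseteq> S \<Longrightarrow> F Y Y' = G Y Y'"
  shows "ES2 S p F = ES2 S p G"
  unfolding ES2_def using assms by (intro ES_cong) auto

lemma ES2_mono:
  assumes "0 \<le> p" "p \<le> 1" "\<And>Y Y'. Y \<subseteq> S \<Longrightarrow> Y' \<subseteq> S \<Longrightarrow> F Y Y' \<le> G Y Y'"
  shows "ES2 S p F \<le> ES2 S p G"
  unfolding ES2_def using assms by (intro ES_mono) auto

lemma ES2_add: "ES2 S p (\<lambda>Y Y'. F Y Y' + G Y Y') = ES2 S p F + ES2 S p G"
  unfolding ES2_def by (simp add: ES_add)

lemma ES2_sum: "finite I \<Longrightarrow> ES2 S p (\<lambda>Y Y'. \<Sum>i\<in>I. F i Y Y') = (\<Sum>i\<in>I. ES2 S p (F i))"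
  unfolding ES2_def by (simp add: ES_sum)

lemma ES2_jensen:
  assumes "finite S" "0 \<le> p" "p \<le> 1"
  shows "ES2 S p (\<lambda>Y Y'. \<bar>F Y Y'\<bar>) \<le> sqrt (ES2 S p (\<lambda>Y Y'. (F Y Y')^2))"
proof -
  have "(ES2 S p (\<lambda>Y Y'. \<bar>F Y Y'\<bar>))^2 \<le> ES S p (\<lambda>Y. (ES S p (\<lambda>Y'. \<bar>F Y Y'\<bar>))^2)"
    unfolding ES2_def by (rule ES_jensen[OF assms])
  also have "\<dots> \<le> ES S p (\<lambda>Y. ES S p (\<lambda>Y'. \<bar>F Y Y'\<bar>^2))"
    by (rule ES_mono[OF assms(2,3)]) (rule ES_jensen[OF assms])
  also have "\<dots> = ES2 S p (\<lambda>Y Y'. (F Y Y')^2)" unfolding ES2_def by simp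
  finally show ?thesis by (metis real_le_rsqrt)
qed

lemma ES2_var:
  assumes "finite S"
  shows "ES2 S p (\<lambda>Y Y'. (a + (\<Sum>j\<in>Y. c j) - (\<Sum>j\<in>Y'. c j))^2) = a^2 + 2*p*(1-p)*(\<Sum>j\<in>S. (c j)^2)"
  using assms
proof (induction S arbitrary: a rule: finite_induct)
  case empty then show ?case by (simp add: ES2_def)
next
  case (insert x S)
  have fs: "\<And>Y. Y \<subseteq> S \<Longrightarrow> finite Y \<and> x \<notin> Y" using insert finite_subset by blast
  have e1: "ES2 S p (\<lambda>Y Y'. (a + (\<Sum>j\<in>insert x Y. c j) - (\<Sum>j\<in>insert x Y'. c j))^2)
     = ES2 S p (\<lambda>Y Y'. (a + (\<Sum>j\<in>Y. c j) - (\<Sum>j\<in>Y'. c j))^2)"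
    by (rule ES2_cong) (simp add: fs algebra_simps)
  have e2: "ES2 S p (\<lambda>Y Y'. (a + (\<Sum>j\<in>insert x Y. c j) - (\<Sum>j\<in>Y'. c j))^2)
     = ES2 S p (\<lambda>Y Y'. ((a + c x) + (\<Sum>j\<in>Y. c j) - (\<Sum>j\<in>Y'. c j))^2)"
    by (rule ES2_cong) (simp add: fs algebra_simps)
  have e3: "ES2 S p (\<lambda>Y Y'. (a + (\<Sum>j\<in>Y. c j) - (\<Sum>j\<in>insert x Y'. c j))^2)
     = ES2 S p (\<lambda>Y Y'. ((a - c x) + (\<Sum>j\<in>Y. c j) - (\<Sum>j\<in>Y'. c j))^2)"
    by (rule ES2_cong) (simp add: fs algebra_simps)
  show ?case
    unfolding ES2_insert[OF insert(1,2)] e1 e2 e3 insert.IH using insert(1,2)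
    by (simp add: power2_eq_square algebra_simps)
qed

lemma key_max:
  fixes T :: "'a set" and \<alpha> \<beta> w :: "'a \<Rightarrow> real"
  assumes "finite T" "T \<noteq> {}" "\<And>s t. s \<in> T \<Longrightarrow> t \<in> T \<Longrightarrow> \<bar>\<alpha> s - \<alpha> t\<bar> \<le> \<bar>\<beta> s - \<beta> t\<bar>"
  shows "Max ((\<lambda>t. w t + \<alpha> t) ` T) + Max ((\<lambda>t. w t - \<alpha> t) ` T)
       \<le> Max ((\<lambda>t. w t + \<beta> t) ` T) + Max ((\<lambda>t. w t - \<beta> t) ` T)"
proof -
  have "Max ((\<lambda>t. w t + \<alpha> t) ` T) \<in> (\<lambda>t. w t + \<alpha> t) ` T" by (rule Max_in) (use assms in auto)
  then obtain s where s: "s \<in> T" "Max ((\<lambda>t. w t + \<alpha> t) ` T) = w s + \<alpha> s" by auto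
  have "Max ((\<lambda>t. w t - \<alpha> t) ` T) \<in> (\<lambda>t. w t - \<alpha> t) ` T" by (rule Max_in) (use assms in auto)
  then obtain t where t: "t \<in> T" "Max ((\<lambda>t. w t - \<alpha> t) ` T) = w t - \<alpha> t" by auto
  have m: "\<And>r. r \<in> T \<Longrightarrow> w r + \<beta> r \<le> Max ((\<lambda>t. w t + \<beta> t) ` T) \<and> w r - \<beta> r \<le> Max ((\<lambda>t. w t - \<beta> t) ` T)"
    using assms by auto
  have "\<bar>\<alpha> s - \<alpha> t\<bar> \<le> \<bar>\<beta> s - \<beta> t\<bar>" using assms s t by auto
  show ?thesis
  proof (cases "\<beta> t \<le> \<beta> s")
    case True
    then have "\<bar>\<beta> s - \<beta> t\<bar> = \<beta> s - \<beta> t" by simp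
    then have "\<alpha> s - \<alpha> t \<le> \<beta> s - \<beta> t" using \<open>\<bar>\<alpha> s - \<alpha> t\<bar> \<le> _\<close> abs_ge_self[of "\<alpha> s - \<alpha> t"] by linarith
    then show ?thesis using s t m[OF s(1)] m[OF t(1)] by linarith
  next
    case False
    then have "\<bar>\<beta> s - \<beta> t\<bar> = \<beta> t - \<beta> s" by simp
    then have "\<alpha> s - \<alpha> t \<le> \<beta> t - \<beta> s" using \<open>\<bar>\<alpha> s - \<alpha> t\<bar> \<le> _\<close> abs_ge_self[of "\<alpha> s - \<alpha> t"] by linarith
    then show ?thesis using s t m[OF s(1)] m[OF t(1)] by linarith
  qed
qed

definition Phi :: "'a set \<Rightarrow> (nat \<Rightarrow> 'a \<Rightarrow> real) \<Rightarrow> ('a \<Rightarrow> real) \<Rightarrow> nat set \<Rightarrow> nat set \<Rightarrow> real" where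
  "Phi T a u Y Y' = Max ((\<lambda>t. u t + (\<Sum>j\<in>Y. a j t) - (\<Sum>j\<in>Y'. a j t)) ` T)"

lemma contraction:
  assumes "finite S" "finite T" "T \<noteq> {}" "0 \<le> p" "p \<le> 1"
    "\<And>j s t. j \<in> S \<Longrightarrow> s \<in> T \<Longrightarrow> t \<in> T \<Longrightarrow> \<bar>a j s - a j t\<bar> \<le> \<bar>b j s - b j t\<bar>"
  shows "ES2 S p (Phi T a u) \<le> ES2 S p (Phi T b u)"
  using assms(1,6)
proof (induction S arbitrary: u rule: finite_induct)
  case empty then show ?case by (simp add: ES2_def Phi_def)
next
  case (insert x S)
  have fs: "\<And>Y. Y \<subseteq> S \<Longrightarrow> finite Y \<and> x \<notin> Y" using insert finite_subset by blast
  have sh: "ES2 S p (\<lambda>Y Y'. Phi T c v (insert x Y) (insert x Y')) = ES2 S p (Phi T c v)"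
    "ES2 S p (\<lambda>Y Y'. Phi T c v (insert x Y) Y') = ES2 S p (Phi T c (\<lambda>t. v t + c x t))"
    "ES2 S p (\<lambda>Y Y'. Phi T c v Y (insert x Y')) = ES2 S p (Phi T c (\<lambda>t. v t - c x t))"
    for c v
    by (auto intro!: ES2_cong arg_cong[where f=Max] image_cong simp: Phi_def fs algebra_simps)
  have IH: "\<And>v. ES2 S p (Phi T a v) \<le> ES2 S p (Phi T b v)"
    using insert.IH insert.prems by auto
  have K: "ES2 S p (Phi T b (\<lambda>t. u t + a x t)) + ES2 S p (Phi T b (\<lambda>t. u t - a x t))
     \<le> ES2 S p (Phi T b (\<lambda>t. u t + b x t)) + ES2 S p (Phi T b (\<lambda>t. u t - b x t))"
    unfolding ES2_add[symmetric]
  proof (rule ES2_mono[OF assms(4,5)])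
    fix Y Y'
    let ?w = "\<lambda>t. u t + (\<Sum>j\<in>Y. b j t) - (\<Sum>j\<in>Y'. b j t)"
    have "Max ((\<lambda>t. ?w t + a x t) ` T) + Max ((\<lambda>t. ?w t - a x t) ` T)
       \<le> Max ((\<lambda>t. ?w t + b x t) ` T) + Max ((\<lambda>t. ?w t - b x t) ` T)"
      by (rule key_max[OF assms(2,3)]) (use insert.prems in auto)
    then show "Phi T b (\<lambda>t. u t + a x t) Y Y' + Phi T b (\<lambda>t. u t - a x t) Y Y'
        \<le> Phi T b (\<lambda>t. u t + b x t) Y Y' + Phi T b (\<lambda>t. u t - b x t) Y Y'"
      unfolding Phi_def by (simp add: algebra_simps)
  qed
  have p1: "0 \<le> p*p" "0 \<le> p*(1-p)" "0 \<le> (1-p)*(1-p)" using assms(4,5) by auto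
  have "ES2 (insert x S) p (Phi T a u) = (p*p + (1-p)*(1-p)) * ES2 S p (Phi T a u)
     + p*(1-p) * (ES2 S p (Phi T a (\<lambda>t. u t + a x t)) + ES2 S p (Phi T a (\<lambda>t. u t - a x t)))"
    unfolding ES2_insert[OF insert(1,2)] sh by (simp add: algebra_simps)
  also have "\<dots> \<le> (p*p + (1-p)*(1-p)) * ES2 S p (Phi T b u)
     + p*(1-p) * (ES2 S p (Phi T b (\<lambda>t. u t + a x t)) + ES2 S p (Phi T b (\<lambda>t. u t - a x t)))"
    using IH p1 by (intro add_mono mult_left_mono) auto
  also have "\<dots> \<le> (p*p + (1-p)*(1-p)) * ES2 S p (Phi T b u)
     + p*(1-p) * (ES2 S p (Phi T b (\<lambda>t. u t + b x t)) + ES2 S p (Phi T b (\<lambda>t. u t - b x t)))"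
    by (rule add_mono[OF order_refl mult_left_mono[OF K p1(2)]])
  also have "\<dots> = ES2 (insert x S) p (Phi T b u)"
    unfolding ES2_insert[OF insert(1,2)] sh by (simp add: algebra_simps)
  finally show ?case .
qed

lemma one_sided:
  fixes T :: "'a set" and c :: "nat \<Rightarrow> 'a \<Rightarrow> real"
  assumes "finite S" "finite T" "T \<noteq> {}" "0 \<le> p" "p \<le> 1"
  shows "ES S p (\<lambda>Y. Max ((\<lambda>t. \<Sum>j\<in>Y. c j t) ` T))
    \<le> p * Max ((\<lambda>t. \<Sum>j\<in>S. c j t) ` T) + ES2 S p (Phi T c (\<lambda>t. 0))"
proof -
  let ?M = "Max ((\<lambda>t. \<Sum>j\<in>S. c j t) ` T)"
  have "ES S p (\<lambda>Y. Max ((\<lambda>t. \<Sum>j\<in>Y. c j t) ` T)) \<le> ES S p (\<lambda>Y. p * ?M + ES S p (\<lambda>Y'. Phi T c (\<lambda>t. 0) Y Y'))"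
  proof (rule ES_mono[OF assms(4,5)])
    fix Y assume Y: "Y \<subseteq> S"
    show "Max ((\<lambda>t. \<Sum>j\<in>Y. c j t) ` T) \<le> p * ?M + ES S p (\<lambda>Y'. Phi T c (\<lambda>t. 0) Y Y')"
    proof -
      have "\<forall>t\<in>T. (\<Sum>j\<in>Y. c j t) \<le> p * ?M + ES S p (\<lambda>Y'. Phi T c (\<lambda>t. 0) Y Y')"
      proof
        fix t assume t: "t \<in> T"
        have "(\<Sum>j\<in>Y. c j t) - p * (\<Sum>j\<in>S. c j t) = ES S p (\<lambda>Y'. (\<Sum>j\<in>Y. c j t) - (\<Sum>j\<in>Y'. c j t))"
          using assms by (simp add: ES_diff ES_const ES_sum_set)
        also have "\<dots> \<le> ES S p (\<lambda>Y'. Phi T c (\<lambda>t. 0) Y Y')"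
          by (rule ES_mono[OF assms(4,5)]) (use t assms in \<open>auto simp: Phi_def intro!: Max_ge\<close>)
        finally have 1: "(\<Sum>j\<in>Y. c j t) \<le> p * (\<Sum>j\<in>S. c j t) + ES S p (\<lambda>Y'. Phi T c (\<lambda>t. 0) Y Y')"
          by linarith
        have "(\<Sum>j\<in>S. c j t) \<le> ?M" using t assms by (auto intro!: Max_ge)
        then have "p * (\<Sum>j\<in>S. c j t) \<le> p * ?M" using assms by (intro mult_left_mono) auto
        then show "(\<Sum>j\<in>Y. c j t) \<le> p * ?M + ES S p (\<lambda>Y'. Phi T c (\<lambda>t. 0) Y Y')" using 1 by linarith
      qed
      then show ?thesis using assms by (simp add: Max_le_iff)
    qed
  qed
  also have "\<dots> = p * ?M + ES2 S p (Phi T c (\<lambda>t. 0))"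
    unfolding ES2_def using assms by (simp add: ES_add ES_const)
  finally show ?thesis .
qed

lemma max0_lip: "\<bar>max 0 (x::real) - max 0 y\<bar> \<le> \<bar>x - y\<bar>"
  by (auto simp: max_def abs_if)

lemma lin_bound:
  fixes B :: "nat \<Rightarrow> nat \<Rightarrow> real"
  assumes "finite W" "Y \<subseteq> U" "Y' \<subseteq> U" "finite U"
  shows "Phi (Pow W) (\<lambda>j I. \<Sum>i\<in>I. B i j) (\<lambda>t. 0) Y Y' \<le> (\<Sum>i\<in>W. \<bar>(\<Sum>j\<in>Y. B i j) - (\<Sum>j\<in>Y'. B i j)\<bar>)"
  unfolding Phi_def
proof (subst Max_le_iff, use assms in auto)
  fix I assume I: "I \<subseteq> W"
  have "(\<Sum>j\<in>Y. \<Sum>i\<in>I. B i j) - (\<Sum>j\<in>Y'. \<Sum>i\<in>I. B i j) = (\<Sum>i\<in>I. (\<Sum>j\<in>Y. B i j) - (\<Sum>j\<in>Y'. B i j))"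
    by (simp add: sum.swap[of _ Y] sum.swap[of _ Y'] sum_subtractf)
  also have "\<dots> \<le> (\<Sum>i\<in>I. \<bar>(\<Sum>j\<in>Y. B i j) - (\<Sum>j\<in>Y'. B i j)\<bar>)" by (intro sum_mono) auto
  also have "\<dots> \<le> (\<Sum>i\<in>W. \<bar>(\<Sum>j\<in>Y. B i j) - (\<Sum>j\<in>Y'. B i j)\<bar>)"
    using I assms by (intro sum_mono2) auto
  finally show "(\<Sum>j\<in>Y. \<Sum>i\<in>I. B i j) - (\<Sum>j\<in>Y'. \<Sum>i\<in>I. B i j) \<le> (\<Sum>i\<in>W. \<bar>(\<Sum>j\<in>Y. B i j) - (\<Sum>j\<in>Y'. B i j)\<bar>)" .
qed

lemma one_sided_matrix:
  fixes B :: "nat \<Rightarrow> nat \<Rightarrow> real"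
  assumes "finite U" "finite W" "0 \<le> p" "p \<le> 1"
  shows "ES U p (\<lambda>Y. Max ((\<lambda>I. \<Sum>j\<in>Y. max 0 (\<Sum>i\<in>I. B i j)) ` Pow W))
    \<le> p * Max ((\<lambda>I. \<Sum>j\<in>U. max 0 (\<Sum>i\<in>I. B i j)) ` Pow W)
      + sqrt (2*p) * (\<Sum>i\<in>W. sqrt (\<Sum>j\<in>U. (B i j)^2))"
proof -
  have T: "finite (Pow W)" "Pow W \<noteq> {}" using assms by auto
  have "ES U p (\<lambda>Y. Max ((\<lambda>I. \<Sum>j\<in>Y. max 0 (\<Sum>i\<in>I. B i j)) ` Pow W))
    \<le> p * Max ((\<lambda>I. \<Sum>j\<in>U. max 0 (\<Sum>i\<in>I. B i j)) ` Pow W)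
      + ES2 U p (Phi (Pow W) (\<lambda>j I. max 0 (\<Sum>i\<in>I. B i j)) (\<lambda>t. 0))"
    by (rule one_sided[OF assms(1) T assms(3,4)])
  also have "ES2 U p (Phi (Pow W) (\<lambda>j I. max 0 (\<Sum>i\<in>I. B i j)) (\<lambda>t. 0))
      \<le> ES2 U p (Phi (Pow W) (\<lambda>j I. \<Sum>i\<in>I. B i j) (\<lambda>t. 0))"
    by (rule contraction[OF assms(1) T assms(3,4)]) (rule max0_lip)
  also have "\<dots> \<le> ES2 U p (\<lambda>Y Y'. \<Sum>i\<in>W. \<bar>(\<Sum>j\<in>Y. B i j) - (\<Sum>j\<in>Y'. B i j)\<bar>)"
    by (rule ES2_mono[OF assms(3,4)]) (rule lin_bound, use assms in auto)
  also have "\<dots> = (\<Sum>i\<in>W. ES2 U p (\<lambda>Y Y'. \<bar>(\<Sum>j\<in>Y. B i j) - (\<Sum>j\<in>Y'. B i j)\<bar>))"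
    using assms by (simp add: ES2_sum)
  also have "\<dots> \<le> (\<Sum>i\<in>W. sqrt (2*p) * sqrt (\<Sum>j\<in>U. (B i j)^2))"
  proof (rule sum_mono)
    fix i assume "i \<in> W"
    have "ES2 U p (\<lambda>Y Y'. \<bar>(\<Sum>j\<in>Y. B i j) - (\<Sum>j\<in>Y'. B i j)\<bar>)
        \<le> sqrt (ES2 U p (\<lambda>Y Y'. ((\<Sum>j\<in>Y. B i j) - (\<Sum>j\<in>Y'. B i j))^2))"
      by (rule ES2_jensen[OF assms(1,3,4)])
    also have "ES2 U p (\<lambda>Y Y'. ((\<Sum>j\<in>Y. B i j) - (\<Sum>j\<in>Y'. B i j))^2) = 2*p*(1-p)*(\<Sum>j\<in>U. (B i j)^2)"
      using ES2_var[OF assms(1), of p 0 "\<lambda>j. B i j"] by simp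
    also have "sqrt (2*p*(1-p)*(\<Sum>j\<in>U. (B i j)^2)) \<le> sqrt (2*p*(\<Sum>j\<in>U. (B i j)^2))"
    proof (rule real_sqrt_le_mono)
      have "0 \<le> (\<Sum>j\<in>U. (B i j)^2)" by (intro sum_nonneg) auto
      then show "2*p*(1-p)*(\<Sum>j\<in>U. (B i j)^2) \<le> 2*p*(\<Sum>j\<in>U. (B i j)^2)"
        using assms mult_left_le_one_le[of "\<Sum>j\<in>U. (B i j)^2" "1-p"]
        by (simp add: mult.assoc mult_left_mono)
    qed
    also have "\<dots> = sqrt (2*p) * sqrt (\<Sum>j\<in>U. (B i j)^2)" by (simp add: real_sqrt_mult)
    finally show "ES2 U p (\<lambda>Y Y'. \<bar>(\<Sum>j\<in>Y. B i j) - (\<Sum>j\<in>Y'. B i j)\<bar>) \<le> sqrt (2*p) * sqrt (\<Sum>j\<in>U. (B i j)^2)" .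
  qed
  finally show ?thesis by (simp add: sum_distrib_left)
qed

definition S2 :: "(nat \<Rightarrow> nat \<Rightarrow> real) \<Rightarrow> nat set \<Rightarrow> nat set \<Rightarrow> real" where
  "S2 A I J = (\<Sum>i\<in>I. \<Sum>j\<in>J. A i j)"

definition bip :: "(nat \<Rightarrow> nat \<Rightarrow> real) \<Rightarrow> nat set \<Rightarrow> nat set \<Rightarrow> real" where
  "bip A X Y = Max ((\<lambda>(I,J). S2 A I J) ` (Pow X \<times> Pow Y))"

lemma bip_ge: "finite X \<Longrightarrow> finite Y \<Longrightarrow> I \<subseteq> X \<Longrightarrow> J \<subseteq> Y \<Longrightarrow> S2 A I J \<le> bip A X Y"
  unfolding bip_def by (rule Max_ge) force+

lemma sum_max0: "finite R \<Longrightarrow> (\<Sum>j\<in>R. max 0 (f j)) = (\<Sum>j\<in>{j\<in>R. f j > 0}. (f j::real))"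
proof -
  assume R: "finite R"
  have e: "{j\<in>R. f j > 0} = R \<inter> {j. f j > 0}" by auto
  have "(\<Sum>j\<in>{j\<in>R. f j > 0}. f j) = (\<Sum>j\<in>R. if j \<in> {j. f j > 0} then f j else 0)"
    unfolding e by (rule sum.inter_restrict[OF R])
  also have "\<dots> = (\<Sum>j\<in>R. max 0 (f j))" by (rule sum.cong) (auto simp: max_def)
  finally show ?thesis by simp
qed

lemma bip_le1:
  fixes A :: "nat \<Rightarrow> nat \<Rightarrow> real"
  assumes "finite X" "finite Y"
  shows "bip A X Y \<le> Max ((\<lambda>I. \<Sum>j\<in>Y. max 0 (\<Sum>i\<in>I. A i j)) ` Pow X)"
  unfolding bip_def
proof (subst Max_le_iff, use assms in auto)
  fix I J assume IJ: "I \<subseteq> X" "J \<subseteq> Y"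
  have "S2 A I J = (\<Sum>j\<in>J. \<Sum>i\<in>I. A i j)" unfolding S2_def by (rule sum.swap)
  also have "\<dots> \<le> (\<Sum>j\<in>J. max 0 (\<Sum>i\<in>I. A i j))" by (intro sum_mono) auto
  also have "\<dots> \<le> (\<Sum>j\<in>Y. max 0 (\<Sum>i\<in>I. A i j))" using assms IJ by (intro sum_mono2) auto
  also have "\<dots> \<le> Max ((\<lambda>I. \<Sum>j\<in>Y. max 0 (\<Sum>i\<in>I. A i j)) ` Pow X)"
    using assms IJ by (intro Max_ge) auto
  finally show "S2 A I J \<le> Max ((\<lambda>I. \<Sum>j\<in>Y. max 0 (\<Sum>i\<in>I. A i j)) ` Pow X)" .
qed

lemma M1_le:
  fixes A :: "nat \<Rightarrow> nat \<Rightarrow> real"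
  assumes "finite X" "finite R"
  shows "Max ((\<lambda>I. \<Sum>j\<in>R. max 0 (\<Sum>i\<in>I. A i j)) ` Pow X)
     \<le> Max ((\<lambda>J. \<Sum>i\<in>X. max 0 (\<Sum>j\<in>J. A i j)) ` Pow R)"
proof (subst Max_le_iff, use assms in auto)
  fix I assume I: "I \<subseteq> X"
  define J0 where "J0 = {j\<in>R. (\<Sum>i\<in>I. A i j) > 0}"
  have "(\<Sum>j\<in>R. max 0 (\<Sum>i\<in>I. A i j)) = (\<Sum>j\<in>J0. \<Sum>i\<in>I. A i j)"
    unfolding J0_def using sum_max0[OF assms(2), of "\<lambda>j. \<Sum>i\<in>I. A i j"] by simp
  also have "\<dots> = (\<Sum>i\<in>I. \<Sum>j\<in>J0. A i j)" by (rule sum.swap)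
  also have "\<dots> \<le> (\<Sum>i\<in>I. max 0 (\<Sum>j\<in>J0. A i j))" by (intro sum_mono) auto
  also have "\<dots> \<le> (\<Sum>i\<in>X. max 0 (\<Sum>j\<in>J0. A i j))" using assms I by (intro sum_mono2) auto
  also have "\<dots> \<le> Max ((\<lambda>J. \<Sum>i\<in>X. max 0 (\<Sum>j\<in>J. A i j)) ` Pow R)"
    using assms by (intro Max_ge) (auto simp: J0_def)
  finally show "(\<Sum>j\<in>R. max 0 (\<Sum>i\<in>I. A i j)) \<le> Max ((\<lambda>J. \<Sum>i\<in>X. max 0 (\<Sum>j\<in>J. A i j)) ` Pow R)" .
qed

lemma M2_le:
  fixes A :: "nat \<Rightarrow> nat \<Rightarrow> real"
  assumes "finite L" "finite R"
  shows "Max ((\<lambda>J. \<Sum>i\<in>L. max 0 (\<Sum>j\<in>J. A i j)) ` Pow R) \<le> bip A L R"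
proof (subst Max_le_iff, use assms in auto)
  fix J assume J: "J \<subseteq> R"
  define I0 where "I0 = {i\<in>L. (\<Sum>j\<in>J. A i j) > 0}"
  have "(\<Sum>i\<in>L. max 0 (\<Sum>j\<in>J. A i j)) = (\<Sum>i\<in>I0. \<Sum>j\<in>J. A i j)"
    unfolding I0_def using sum_max0[OF assms(1), of "\<lambda>i. \<Sum>j\<in>J. A i j"] by simp
  also have "\<dots> = S2 A I0 J" by (simp add: S2_def)
  also have "\<dots> \<le> bip A L R" using assms J by (intro bip_ge) (auto simp: I0_def)
  finally show "(\<Sum>i\<in>L. max 0 (\<Sum>j\<in>J. A i j)) \<le> bip A L R" .
qed

lemma bipartite:
  fixes A :: "nat \<Rightarrow> nat \<Rightarrow> real"
  assumes "finite L" "finite R" "0 \<le> p" "p \<le> 1"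
  shows "ES L p (\<lambda>X. ES R p (\<lambda>Y. bip A X Y)) \<le> p^2 * bip A L R
     + p * sqrt (2*p) * ((\<Sum>j\<in>R. sqrt (\<Sum>i\<in>L. (A i j)^2)) + (\<Sum>i\<in>L. sqrt (\<Sum>j\<in>R. (A i j)^2)))"
proof -
  let ?M2 = "\<lambda>X. Max ((\<lambda>J. \<Sum>i\<in>X. max 0 (\<Sum>j\<in>J. A i j)) ` Pow R)"
  let ?G = "\<Sum>j\<in>R. sqrt (\<Sum>i\<in>L. (A i j)^2)"
  let ?P = "\<Sum>i\<in>L. sqrt (\<Sum>j\<in>R. (A i j)^2)"
  have sp: "0 \<le> sqrt (2*p)" using assms by simp
  have step1: "ES R p (\<lambda>Y. bip A X Y) \<le> p * ?M2 X + sqrt (2*p) * (\<Sum>i\<in>X. sqrt (\<Sum>j\<in>R. (A i j)^2))"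
    if X: "X \<subseteq> L" for X
  proof -
    have fX: "finite X" using X assms finite_subset by blast
    have "ES R p (\<lambda>Y. bip A X Y) \<le> ES R p (\<lambda>Y. Max ((\<lambda>I. \<Sum>j\<in>Y. max 0 (\<Sum>i\<in>I. A i j)) ` Pow X))"
      by (rule ES_mono[OF assms(3,4)]) (rule bip_le1, use fX assms finite_subset in auto)
    also have "\<dots> \<le> p * Max ((\<lambda>I. \<Sum>j\<in>R. max 0 (\<Sum>i\<in>I. A i j)) ` Pow X)
      + sqrt (2*p) * (\<Sum>i\<in>X. sqrt (\<Sum>j\<in>R. (A i j)^2))"
      by (rule one_sided_matrix[OF assms(2) fX assms(3,4)])
    also have "\<dots> \<le> p * ?M2 X + sqrt (2*p) * (\<Sum>i\<in>X. sqrt (\<Sum>j\<in>R. (A i j)^2))"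
      using M1_le[OF fX assms(2), of A] assms by (intro add_mono mult_left_mono) auto
    finally show ?thesis .
  qed
  have h1: "ES L p (\<lambda>X. ES R p (\<lambda>Y. bip A X Y))
     \<le> ES L p (\<lambda>X. p * ?M2 X + sqrt (2*p) * (\<Sum>i\<in>X. sqrt (\<Sum>j\<in>R. (A i j)^2)))"
    by (rule ES_mono[OF assms(3,4)]) (rule step1)
  have h2: "ES L p (\<lambda>X. p * ?M2 X + sqrt (2*p) * (\<Sum>i\<in>X. sqrt (\<Sum>j\<in>R. (A i j)^2)))
      = p * ES L p ?M2 + sqrt (2*p) * (p * ?P)"
    using assms by (simp add: ES_add ES_cmult ES_sum_set)
  have h3: "ES L p ?M2 \<le> p * Max ((\<lambda>J. \<Sum>i\<in>L. max 0 (\<Sum>j\<in>J. A i j)) ` Pow R) + sqrt (2*p) * ?G"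
    using one_sided_matrix[OF assms(1,2,3,4), of "\<lambda>j i. A i j"] by simp
  have h4: "Max ((\<lambda>J. \<Sum>i\<in>L. max 0 (\<Sum>j\<in>J. A i j)) ` Pow R) \<le> bip A L R"
    by (rule M2_le[OF assms(1,2)])
  have h5: "ES L p ?M2 \<le> p * bip A L R + sqrt (2*p) * ?G"
    using h3 h4 assms(3) mult_left_mono[OF h4 assms(3)] by linarith
  have h6: "p * ES L p ?M2 \<le> p * (p * bip A L R + sqrt (2*p) * ?G)"
    by (rule mult_left_mono[OF h5 assms(3)])
  show ?thesis using h1 h2 h6 by (simp add: power2_eq_square algebra_simps)
qed

lemma ES_split:
  assumes "finite S"
  shows "ES S p (\<lambda>Q. g (Q \<inter> L) (Q - L)) = ES (S \<inter> L) p (\<lambda>X. ES (S - L) p (\<lambda>Y. g X Y))"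
  using assms
proof (induction S arbitrary: g rule: finite_induct)
  case empty then show ?case by simp
next
  case (insert x S)
  show ?case
  proof (cases "x \<in> L")
    case True
    have e1: "insert x S \<inter> L = insert x (S \<inter> L)" "insert x S - L = S - L" using True by auto
    have e2: "\<And>Q. insert x Q \<inter> L = insert x (Q \<inter> L)" "\<And>Q. insert x Q - L = Q - L" using True by auto
    have fin: "finite (S \<inter> L)" "x \<notin> S \<inter> L" using insert by auto
    show ?thesis
      unfolding ES_insert[OF insert(1,2)] e1 e2 ES_insert[OF fin]
      using insert.IH[of "\<lambda>X Y. g (insert x X) Y"] insert.IH[of g] insert(2) by simp
  next
    case False
    have e1: "insert x S \<inter> L = S \<inter> L" "insert x S - L = insert x (S - L)" using False by auto
    have e2: "\<And>Q. insert x Q \<inter> L = Q \<inter> L" "\<And>Q. insert x Q - L = insert x (Q - L)" using False by auto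
    have fin: "finite (S - L)" "x \<notin> S - L" using insert by auto
    show ?thesis
      unfolding ES_insert[OF insert(1,2)] e1 e2 ES_insert[OF fin]
      using insert.IH[of "\<lambda>X Y. g X (insert x Y)"] insert.IH[of g] by (simp add: ES_add ES_cmult)
  qed
qed

lemma decouple_id:
  fixes A :: "nat \<Rightarrow> nat \<Rightarrow> real"
  assumes "finite N" "I \<subseteq> N" "J \<subseteq> N"
  shows "ES N (1/2) (\<lambda>L. S2 A (I \<inter> L) (J - L)) = (S2 A I J - (\<Sum>i\<in>I \<inter> J. A i i)) / 4"
proof -
  have fI: "finite I" "finite J" using assms finite_subset by auto
  have "\<And>L. S2 A (I \<inter> L) (J - L) = (\<Sum>i\<in>I. \<Sum>j\<in>J. A i j * (if i \<in> L \<and> j \<notin> L then 1 else 0))"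
  proof -
    fix L
    have "S2 A (I \<inter> L) (J - L) = (\<Sum>i\<in>I. if i \<in> L then (\<Sum>j\<in>J \<inter> -L. A i j) else 0)"
      unfolding S2_def Diff_eq by (rule sum.inter_restrict[OF fI(1)])
    also have "\<dots> = (\<Sum>i\<in>I. \<Sum>j\<in>J. A i j * (if i \<in> L \<and> j \<notin> L then 1 else 0))"
    proof (rule sum.cong[OF refl])
      fix i
      show "(if i \<in> L then (\<Sum>j\<in>J \<inter> -L. A i j) else 0) = (\<Sum>j\<in>J. A i j * (if i \<in> L \<and> j \<notin> L then 1 else 0))"
        using sum.inter_restrict[OF fI(2), of "A i" "-L"] by (auto intro!: sum.cong)
    qed
    finally show "S2 A (I \<inter> L) (J - L) = (\<Sum>i\<in>I. \<Sum>j\<in>J. A i j * (if i \<in> L \<and> j \<notin> L then 1 else 0))" .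
  qed
  then have "ES N (1/2) (\<lambda>L. S2 A (I \<inter> L) (J - L))
     = (\<Sum>i\<in>I. \<Sum>j\<in>J. A i j * ES N (1/2) (\<lambda>L. if i \<in> L \<and> j \<notin> L then 1 else 0))"
    using fI by (simp add: ES_sum ES_cmult)
  also have "\<dots> = (\<Sum>i\<in>I. \<Sum>j\<in>J. A i j * (if i = j then 0 else 1/4))"
  proof (intro sum.cong refl)
    fix i j assume ij: "i \<in> I" "j \<in> J"
    show "A i j * ES N (1/2) (\<lambda>L. if i \<in> L \<and> j \<notin> L then 1 else 0) = A i j * (if i = j then 0 else 1/4)"
    proof (cases "i = j")
      case True then show ?thesis using assms by (simp add: ES_const)
    next
      case False then show ?thesis using assms ij ES_ind2[OF assms(1), of i j "1/2"] by auto
    qed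
  qed
  also have "\<dots> = (\<Sum>i\<in>I. (\<Sum>j\<in>J. A i j) / 4 - (if i \<in> J then A i i else 0) / 4)"
  proof (rule sum.cong[OF refl])
    fix i
    have "(\<Sum>j\<in>J. A i j * (if i = j then 0 else 1/4)) = (\<Sum>j\<in>J. A i j / 4 - (if i = j then A i j / 4 else 0))"
      by (rule sum.cong) auto
    also have "\<dots> = (\<Sum>j\<in>J. A i j) / 4 - (if i \<in> J then A i i else 0) / 4"
      using fI by (simp add: sum_subtractf sum_divide_distrib)
    finally show "(\<Sum>j\<in>J. A i j * (if i = j then 0 else 1/4)) = (\<Sum>j\<in>J. A i j) / 4 - (if i \<in> J then A i i else 0) / 4" .
  qed
  also have "\<dots> = (S2 A I J - (\<Sum>i\<in>I \<inter> J. A i i)) / 4"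
    unfolding S2_def using sum.inter_restrict[OF fI(1), of "\<lambda>i. A i i" J]
    by (simp add: sum_subtractf sum_divide_distrib diff_divide_distrib)
  finally show ?thesis .
qed

lemma bip_nonneg: "finite X \<Longrightarrow> finite Y \<Longrightarrow> 0 \<le> bip A X Y"
  using bip_ge[of X Y "{}" "{}" A] by (simp add: S2_def)

lemma diag_decouple:
  fixes A :: "nat \<Rightarrow> nat \<Rightarrow> real"
  assumes "finite N" "Q \<subseteq> N"
  shows "bip A Q Q \<le> 4 * ES N (1/2) (\<lambda>L. bip A (Q \<inter> L) (Q - L)) + (\<Sum>i\<in>Q. \<bar>A i i\<bar>)"
proof -
  have fQ: "finite Q" using assms finite_subset by auto
  let ?R = "4 * ES N (1/2) (\<lambda>L. bip A (Q \<inter> L) (Q - L)) + (\<Sum>i\<in>Q. \<bar>A i i\<bar>)"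
  have "\<forall>x\<in>(\<lambda>(I,J). S2 A I J) ` (Pow Q \<times> Pow Q). x \<le> ?R"
  proof (clarsimp)
    fix I J assume IJ: "I \<subseteq> Q" "J \<subseteq> Q"
    have d: "ES N (1/2) (\<lambda>L. S2 A (I \<inter> L) (J - L)) = (S2 A I J - (\<Sum>i\<in>I \<inter> J. A i i)) / 4"
      using decouple_id[OF assms(1), of I J A] IJ assms(2) by auto
    have e1: "S2 A I J = 4 * ES N (1/2) (\<lambda>L. S2 A (I \<inter> L) (J - L)) + (\<Sum>i\<in>I \<inter> J. A i i)"
      unfolding d by (simp add: field_simps)
    have e2: "ES N (1/2) (\<lambda>L. S2 A (I \<inter> L) (J - L)) \<le> ES N (1/2) (\<lambda>L. bip A (Q \<inter> L) (Q - L))"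
      by (rule ES_mono) (use IJ fQ in \<open>auto intro!: bip_ge\<close>)
    have "(\<Sum>i\<in>I \<inter> J. A i i) \<le> (\<Sum>i\<in>I \<inter> J. \<bar>A i i\<bar>)" by (intro sum_mono) auto
    also have "\<dots> \<le> (\<Sum>i\<in>Q. \<bar>A i i\<bar>)" using IJ fQ by (intro sum_mono2) auto
    finally have e3: "(\<Sum>i\<in>I \<inter> J. A i i) \<le> (\<Sum>i\<in>Q. \<bar>A i i\<bar>)" .
    show "S2 A I J \<le> ?R" using e1 e2 e3 by linarith
  qed
  then show ?thesis unfolding bip_def using fQ by (subst Max_le_iff) auto
qed

lemma CS_sqrt:
  fixes r :: "nat \<Rightarrow> real"
  assumes "\<And>i. 0 \<le> r i"
  shows "(\<Sum>i\<in>I. sqrt (r i)) \<le> sqrt (card I * (\<Sum>i\<in>I. r i))"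
proof -
  have "(\<Sum>i\<in>I. sqrt (r i))^2 \<le> (\<Sum>i\<in>I. (sqrt (r i))^2) * card I"
    by (rule sum_squared_le_sum_of_squares)
  also have "\<dots> = card I * (\<Sum>i\<in>I. r i)" using assms by simp
  finally show ?thesis by (rule real_le_rsqrt)
qed

lemma CS_matrix:
  fixes B :: "nat \<Rightarrow> nat \<Rightarrow> real"
  assumes "U \<subseteq> {..<n}" "V \<subseteq> {..<n}" "(\<Sum>i<n. \<Sum>j<n. (B i j)^2) \<le> F^2" "0 \<le> F"
  shows "(\<Sum>i\<in>U. sqrt (\<Sum>j\<in>V. (B i j)^2)) \<le> sqrt (real n) * F"
proof -
  have "(\<Sum>i\<in>U. sqrt (\<Sum>j\<in>V. (B i j)^2)) \<le> sqrt (card U * (\<Sum>i\<in>U. \<Sum>j\<in>V. (B i j)^2))"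
    by (rule CS_sqrt) (simp add: sum_nonneg)
  also have "\<dots> \<le> sqrt (real n * F^2)"
  proof (rule real_sqrt_le_mono, rule mult_mono)
    show "real (card U) \<le> real n" using card_mono[OF _ assms(1)] by simp
    have "(\<Sum>i\<in>U. \<Sum>j\<in>V. (B i j)^2) \<le> (\<Sum>i\<in>U. \<Sum>j<n. (B i j)^2)"
      using assms by (intro sum_mono sum_mono2) auto
    also have "\<dots> \<le> (\<Sum>i<n. \<Sum>j<n. (B i j)^2)"
      using assms by (intro sum_mono2) (auto intro: sum_nonneg)
    finally show "(\<Sum>i\<in>U. \<Sum>j\<in>V. (B i j)^2) \<le> F^2" using assms by linarith
  qed (auto intro!: sum_nonneg)
  also have "\<dots> = sqrt (real n) * F" using assms by (simp add: real_sqrt_mult)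
  finally show ?thesis .
qed

lemma expect_ES:
  assumes "0 \<le> p" "p \<le> 1"
  shows "measure_pmf.expectation (random_subset n p) f = ES {..<n} p f"
proof -
  let ?N = "{..<n::nat}"
  let ?P = "Pi_pmf ?N False (\<lambda>_. bernoulli_pmf p)"
  have sub: "set_pmf (random_subset n p) \<subseteq> Pow ?N"
    unfolding random_subset_def using set_Pi_pmf_subset[of ?N False "\<lambda>_. bernoulli_pmf p"] by auto
  have "measure_pmf.expectation (random_subset n p) f = (\<Sum>Y\<in>Pow ?N. pmf (random_subset n p) Y *\<^sub>R f Y)"
    by (rule integral_measure_pmf) (use sub in auto)
  also have "\<dots> = ES ?N p f"
    unfolding ES_def
  proof (rule sum.cong[OF refl])
    fix Y assume Y: "Y \<in> Pow ?N"
    have inj: "inj (\<lambda>g::nat \<Rightarrow> bool. {i. g i})" by (auto simp: inj_def)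
    have "pmf (random_subset n p) Y = pmf ?P (\<lambda>i. i \<in> Y)"
      unfolding random_subset_def using pmf_map_inj'[OF inj, of ?P "\<lambda>i. i \<in> Y"] by simp
    also have "\<dots> = (\<Prod>x\<in>?N. pmf (bernoulli_pmf p) (x \<in> Y))"
      using Y by (subst pmf_Pi) auto
    also have "\<dots> = (\<Prod>x\<in>?N. if x \<in> Y then p else 1 - p)"
      using assms by (intro prod.cong) auto
    also have "\<dots> = p ^ card Y * (1-p) ^ card (?N - Y)"
    proof -
      have "?N \<inter> {x. x \<in> Y} = Y" "?N \<inter> - {x. x \<in> Y} = ?N - Y" using Y by auto
      then show ?thesis by (simp add: prod.If_cases)
    qed
    finally show "pmf (random_subset n p) Y *\<^sub>R f Y = p ^ card Y * (1-p) ^ card (?N - Y) * f Y" by simp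
  qed
  finally show ?thesis .
qed

lemma cut_set: "{\<bar>\<Sum>i\<in>I. \<Sum>j\<in>J. B i j\<bar> | I J. I \<subseteq> S \<and> J \<subseteq> S} = (\<lambda>(I,J). \<bar>S2 B I J\<bar>) ` (Pow S \<times> Pow S)"
  by (auto simp: S2_def)

lemma cut_ge:
  assumes "finite S" "I \<subseteq> S" "J \<subseteq> S"
  shows "\<bar>S2 B I J\<bar> \<le> cut_norm S B"
  unfolding cut_norm_def cut_set using assms by (intro Max_ge) auto

lemma S2_neg: "S2 (\<lambda>i j. - B i j) I J = - S2 B I J"
  by (simp add: S2_def sum_negf)

lemma cut_le:
  assumes "finite S"
  shows "cut_norm S B \<le> bip B S S + bip (\<lambda>i j. - B i j) S S"
proof -
  have "\<forall>x\<in>(\<lambda>(I,J). \<bar>S2 B I J\<bar>) ` (Pow S \<times> Pow S). x \<le> bip B S S + bip (\<lambda>i j. - B i j) S S"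
  proof clarsimp
    fix I J assume IJ: "I \<subseteq> S" "J \<subseteq> S"
    have 1: "S2 B I J \<le> bip B S S" using assms IJ by (intro bip_ge) auto
    have 2: "- S2 B I J \<le> bip (\<lambda>i j. - B i j) S S" using assms IJ bip_ge[of S S I J "\<lambda>i j. - B i j"]
      by (simp add: S2_neg)
    have 3: "0 \<le> bip B S S" "0 \<le> bip (\<lambda>i j. - B i j) S S" using assms by (auto intro: bip_nonneg)
    show "\<bar>S2 B I J\<bar> \<le> bip B S S + bip (\<lambda>i j. - B i j) S S" using 1 2 3 by linarith
  qed
  then show ?thesis unfolding cut_norm_def cut_set using assms by (subst Max_le_iff) auto
qed

lemma bip_le_C:
  assumes "finite X" "finite Y" "\<And>I J. I \<subseteq> X \<Longrightarrow> J \<subseteq> Y \<Longrightarrow> \<bar>S2 A I J\<bar> \<le> C"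
  shows "bip A X Y \<le> C"
proof -
  have "\<forall>x\<in>(\<lambda>(I,J). S2 A I J) ` (Pow X \<times> Pow Y). x \<le> C"
    using assms(3) by (force simp: abs_le_iff)
  then show ?thesis unfolding bip_def using assms by (subst Max_le_iff) auto
qed

lemma main_bound:
  fixes A :: "nat \<Rightarrow> nat \<Rightarrow> real"
  assumes p: "0 \<le> p" "p \<le> 1"
    and C: "\<And>I J. I \<subseteq> {..<n} \<Longrightarrow> J \<subseteq> {..<n} \<Longrightarrow> \<bar>S2 A I J\<bar> \<le> C"
    and F: "(\<Sum>i<n. \<Sum>j<n. (A i j)^2) \<le> F^2" "0 \<le> F"
    and D: "\<And>i. i < n \<Longrightarrow> \<bar>A i i\<bar> \<le> D"
  shows "ES {..<n} p (\<lambda>Q. bip A Q Q) \<le> 4 * (p^2 * C + p * sqrt (2*p) * (2 * (sqrt (real n) * F))) + p * (real n * D)"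
proof -
  let ?N = "{..<n}"
  let ?c = "p^2 * C + p * sqrt (2*p) * (2 * (sqrt (real n) * F))"
  have fN: "finite ?N" by simp
  have h1: "ES ?N p (\<lambda>Q. bip A Q Q) \<le> ES ?N p (\<lambda>Q. 4 * ES ?N (1/2) (\<lambda>L. bip A (Q \<inter> L) (Q - L)) + (\<Sum>i\<in>Q. \<bar>A i i\<bar>))"
    by (rule ES_mono[OF p]) (rule diag_decouple[OF fN])
  have h2: "ES ?N p (\<lambda>Q. 4 * ES ?N (1/2) (\<lambda>L. bip A (Q \<inter> L) (Q - L)) + (\<Sum>i\<in>Q. \<bar>A i i\<bar>))
     = 4 * ES ?N (1/2) (\<lambda>L. ES ?N p (\<lambda>Q. bip A (Q \<inter> L) (Q - L))) + p * (\<Sum>i\<in>?N. \<bar>A i i\<bar>)"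
    by (simp add: ES_add ES_cmult ES_sum_set ES_swap[of ?N p])
  have h3: "ES ?N p (\<lambda>Q. bip A (Q \<inter> L) (Q - L)) \<le> ?c" if L: "L \<subseteq> ?N" for L
  proof -
    have "ES ?N p (\<lambda>Q. bip A (Q \<inter> L) (Q - L)) = ES (?N \<inter> L) p (\<lambda>X. ES (?N - L) p (\<lambda>Y. bip A X Y))"
      by (rule ES_split[OF fN])
    also have "\<dots> \<le> p^2 * bip A (?N \<inter> L) (?N - L)
     + p * sqrt (2*p) * ((\<Sum>j\<in>?N - L. sqrt (\<Sum>i\<in>?N \<inter> L. (A i j)^2)) + (\<Sum>i\<in>?N \<inter> L. sqrt (\<Sum>j\<in>?N - L. (A i j)^2)))"
      by (rule bipartite) (use p in auto)
    also have "\<dots> \<le> ?c"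
    proof -
      have b1: "bip A (?N \<inter> L) (?N - L) \<le> C" by (rule bip_le_C) (use C in blast)+
      have Ft: "(\<Sum>i<n. \<Sum>j<n. (A j i)^2) \<le> F^2" using F(1) by (subst sum.swap) simp
      have b2: "(\<Sum>j\<in>?N - L. sqrt (\<Sum>i\<in>?N \<inter> L. (A i j)^2)) \<le> sqrt (real n) * F"
        using CS_matrix[of "?N - L" n "?N \<inter> L" "\<lambda>j i. A i j" F] Ft F(2) by auto
      have b3: "(\<Sum>i\<in>?N \<inter> L. sqrt (\<Sum>j\<in>?N - L. (A i j)^2)) \<le> sqrt (real n) * F"
        using CS_matrix[of "?N \<inter> L" n "?N - L" A F] F by auto
      have q1: "p^2 * bip A (?N \<inter> L) (?N - L) \<le> p^2 * C" using b1 by (intro mult_left_mono) auto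
      have q2: "p * sqrt (2*p) * ((\<Sum>j\<in>?N - L. sqrt (\<Sum>i\<in>?N \<inter> L. (A i j)^2)) + (\<Sum>i\<in>?N \<inter> L. sqrt (\<Sum>j\<in>?N - L. (A i j)^2)))
         \<le> p * sqrt (2*p) * (2 * (sqrt (real n) * F))"
        using b2 b3 p by (intro mult_left_mono) auto
      show ?thesis using q1 q2 by linarith
    qed
    finally show ?thesis .
  qed
  have h4: "ES ?N (1/2) (\<lambda>L. ES ?N p (\<lambda>Q. bip A (Q \<inter> L) (Q - L))) \<le> ES ?N (1/2) (\<lambda>L. ?c)"
    by (rule ES_mono) (use h3 in auto)
  have h5: "(\<Sum>i\<in>?N. \<bar>A i i\<bar>) \<le> real n * D"
    using sum_bounded_above[of ?N "\<lambda>i. \<bar>A i i\<bar>" D] D by auto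
  have h6: "p * (\<Sum>i\<in>?N. \<bar>A i i\<bar>) \<le> p * (real n * D)" using h5 p by (intro mult_left_mono) auto
  show ?thesis using h1 h2 h4 h6 by (simp add: ES_const)
qed

theorem corollary1p3:
  fixes K1 K2 K3 K4 :: real
  assumes "K1 > 0" "K2 > 0" "K3 > 0" "K4 > 0"
  shows "\<exists>K>0. \<forall>(\<epsilon>::real) (n::nat) (A::nat \<Rightarrow> nat \<Rightarrow> real) (q::real).
     0 < \<epsilon> \<and> \<epsilon> \<le> 1 \<and> K1 * \<epsilon> powi (-2) \<le> q \<and> q \<le> real n \<and>
     cut_norm {..<n} A \<le> K2 * \<epsilon> * (real n)^2 \<and>
     frob_norm n A \<le> K3 * real n \<and>
     (\<forall>i<n. \<forall>j<n. \<bar>A i j\<bar> \<le> K4 / \<epsilon>)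
     \<longrightarrow> measure_pmf.expectation (random_subset n (q / real n)) (\<lambda>Q. cut_norm Q A)
         \<le> K * \<epsilon> * q^2"
proof (intro exI[of _ "8*K2 + 16 * sqrt 2*K3/sqrt K1 + 2*K4/K1"] conjI allI impI)
  have "0 \<le> 16 * sqrt 2*K3/sqrt K1" "0 \<le> 2*K4/K1" using assms by auto
  then show "0 < 8*K2 + 16 * sqrt 2*K3/sqrt K1 + 2*K4/K1" using assms by linarith
  fix \<epsilon> :: real and n :: nat and A :: "nat \<Rightarrow> nat \<Rightarrow> real" and q :: real
  assume H: "0 < \<epsilon> \<and> \<epsilon> \<le> 1 \<and> K1 * \<epsilon> powi (-2) \<le> q \<and> q \<le> real n \<and>
     cut_norm {..<n} A \<le> K2 * \<epsilon> * (real n)^2 \<and>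
     frob_norm n A \<le> K3 * real n \<and>
     (\<forall>i<n. \<forall>j<n. \<bar>A i j\<bar> \<le> K4 / \<epsilon>)"
  then have e0: "0 < \<epsilon>" and hq: "K1 * \<epsilon> powi (-2) \<le> q" and qn: "q \<le> real n"
    and hc: "cut_norm {..<n} A \<le> K2 * \<epsilon> * (real n)^2" and hf: "frob_norm n A \<le> K3 * real n"
    and hd: "\<forall>i<n. \<forall>j<n. \<bar>A i j\<bar> \<le> K4 / \<epsilon>" by auto
  have "\<epsilon> powi (-2) = 1 / \<epsilon>^2" by (simp add: power_int_minus field_simps)
  then have "K1 / \<epsilon>^2 \<le> q" using hq by simp
  then have hq': "K1 \<le> \<epsilon>^2 * q" using e0 by (simp add: divide_le_eq mult.commute)
  have q0: "0 < q" using hq' assms e0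
    by (metis mult_pos_pos not_le order_le_less_trans zero_less_power mult_le_0_iff less_le_not_le)
  have n0: "0 < real n" using q0 qn by linarith
  define p where "p = q / real n"
  have p: "0 \<le> p" "p \<le> 1" using q0 qn n0 by (auto simp: p_def)
  have pn: "p * real n = q" using n0 by (simp add: p_def)
  let ?N = "{..<n}"
  define C where "C = K2 * \<epsilon> * (real n)^2"
  define F where "F = K3 * real n"
  define D where "D = K4 / \<epsilon>"
  have F0: "0 \<le> F" using assms by (simp add: F_def)
  have Cb: "\<bar>S2 B I J\<bar> \<le> C" if "I \<subseteq> ?N" "J \<subseteq> ?N" "B = A \<or> B = (\<lambda>i j. - A i j)" for I J B
  proof -
    have "\<bar>S2 B I J\<bar> = \<bar>S2 A I J\<bar>" using that(3) by (auto simp: S2_neg)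
    also have "\<dots> \<le> cut_norm ?N A" by (rule cut_ge) (use that in auto)
    finally show ?thesis using hc by (simp add: C_def)
  qed
  have Fb: "(\<Sum>i<n. \<Sum>j<n. (A i j)^2) \<le> F^2"
  proof -
    have "(\<Sum>i<n. \<Sum>j<n. (A i j)^2) = (frob_norm n A)^2"
      unfolding frob_norm_def by (simp add: sum_nonneg)
    also have "\<dots> \<le> F^2" using hf F0 unfolding F_def
      by (intro power_mono) (auto simp: frob_norm_def intro!: sum_nonneg)
    finally show ?thesis .
  qed
  have Fb': "(\<Sum>i<n. \<Sum>j<n. (- A i j)^2) \<le> F^2" using Fb by simp
  have Db: "\<bar>A i i\<bar> \<le> D" "\<bar>- A i i\<bar> \<le> D" if "i < n" for i using hd that by (auto simp: D_def)
  let ?c = "4 * (p^2 * C + p * sqrt (2*p) * (2 * (sqrt (real n) * F))) + p * (real n * D)"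
  have m1: "ES ?N p (\<lambda>Q. bip A Q Q) \<le> ?c"
    by (rule main_bound[OF p]) (use Cb Fb F0 Db in auto)
  have m2: "ES ?N p (\<lambda>Q. bip (\<lambda>i j. - A i j) Q Q) \<le> ?c"
    by (rule main_bound[OF p]) (use Cb Fb' F0 Db in auto)
  have "measure_pmf.expectation (random_subset n (q / real n)) (\<lambda>Q. cut_norm Q A) = ES ?N p (\<lambda>Q. cut_norm Q A)"
    unfolding p_def[symmetric] by (rule expect_ES[OF p])
  also have "\<dots> \<le> ES ?N p (\<lambda>Q. bip A Q Q + bip (\<lambda>i j. - A i j) Q Q)"
    by (rule ES_mono[OF p]) (rule cut_le, use finite_subset in auto)
  also have "\<dots> \<le> 2 * ?c" using m1 m2 by (simp add: ES_add)
  also have "2 * ?c = 8*K2* \<epsilon>*q^2 + 16 * sqrt 2*K3*(q* sqrt q) + 2*K4*(q/\<epsilon>)"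
  proof -
    have a1: "p^2 * C = K2* \<epsilon>*q^2" unfolding C_def using pn by (simp add: power2_eq_square algebra_simps)
    have "sqrt (2*p) * sqrt (real n) = sqrt 2 * sqrt q" using pn
      by (metis mult.assoc real_sqrt_mult)
    then have a2: "p * sqrt (2*p) * (2 * (sqrt (real n) * F)) = 2* sqrt 2*K3*(q* sqrt q)"
      unfolding F_def using pn by (simp add: algebra_simps)
    have a3: "p * (real n * D) = K4*(q/\<epsilon>)" unfolding D_def using pn by (simp add: algebra_simps)
    show ?thesis unfolding a1 a2 a3 by (simp add: algebra_simps)
  qed
  also have "\<dots> \<le> (8*K2 + 16 * sqrt 2*K3/sqrt K1 + 2*K4/K1) * \<epsilon> * q^2"
  proof -
    have s1: "q * sqrt q \<le> \<epsilon> * q^2 / sqrt K1"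
    proof -
      have "sqrt K1 \<le> sqrt (\<epsilon>^2 * q)" using hq' by simp
      also have "\<dots> = \<epsilon> * sqrt q" using e0 q0 by (simp add: real_sqrt_mult)
      finally have "sqrt K1 * (q * sqrt q) \<le> \<epsilon> * sqrt q * (q * sqrt q)"
        using q0 by (intro mult_right_mono) auto
      also have "\<dots> = \<epsilon> * q^2" using q0 by (simp add: power2_eq_square algebra_simps)
      finally show ?thesis using assms by (simp add: field_simps)
    qed
    have s2: "q / \<epsilon> \<le> \<epsilon> * q^2 / K1"
    proof -
      have "K1 * (q / \<epsilon>) \<le> \<epsilon>^2 * q * (q / \<epsilon>)" using hq' q0 e0 by (intro mult_right_mono) auto
      also have "\<dots> = \<epsilon> * q^2" using e0 by (simp add: power2_eq_square field_simps)
      finally show ?thesis using assms by (simp add: field_simps)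
    qed
    have t1: "16 * sqrt 2*K3*(q* sqrt q) \<le> 16 * sqrt 2*K3*(\<epsilon> * q^2 / sqrt K1)"
      using s1 assms by (intro mult_left_mono) auto
    have t2: "2*K4*(q/\<epsilon>) \<le> 2*K4*(\<epsilon> * q^2 / K1)"
      using s2 assms by (intro mult_left_mono) auto
    show ?thesis using t1 t2 by (simp add: algebra_simps)
  qed
  finally show "measure_pmf.expectation (random_subset n (q / real n)) (\<lambda>Q. cut_norm Q A)
     \<le> (8*K2 + 16 * sqrt 2*K3/sqrt K1 + 2*K4/K1) * \<epsilon> * q^2" .
qed

end
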